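(* Let $\kappa$ be an infinite cardinal and let $(F_\xi)_{\xi\in\kappa}$ be a family of nonempty finite sets. Then there exists a set $X$ such that (i) $|\{\xi\in\kappa:|F_\xi\cap X|=1\}|=\kappa$; and moreover $X$ can be chosen so that, in addition to (i): (ii) $|X|$ is equal to $1$, to $\mathrm{cf}(\kappa)$, or to $\kappa$; (iii) every subset $X'\subseteq X$ with $|X'|=|X|$ also satisfies $|\{\xi\in\kappa:|F_\xi\cap X'|=1\}|=\kappa$; (iv) for each $x\in X$ there is at least one $\xi\in\kappa$ with $F_\xi\cap X=\{x\}$.
   Context: $\mathrm{cf}(\kappa)$ denotes the cofinality of the cardinal $\kappa$. *)

theory Defs
  imports Main
begin

text \<open>card_of I is a cardinal well-order on I, i.e. the initial ordinal of the cardinal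
kappa = card of I.\<close>

definition has_card_cf :: "'b set \<Rightarrow> 'a set \<Rightarrow> bool" where
  "has_card_cf X I \<equiv>
     \<exists>K. K \<subseteq> I \<and> cofinal K (card_of I) \<and>
         (\<forall>K'. K' \<subseteq> I \<and> cofinal K' (card_of I) \<longrightarrow> (card_of K, card_of K') \<in> ordLeq) \<and>
         (card_of X, card_of K) \<in> ordIso"

end

theory Submission
  imports Defs
begin

context
  includes cardinal_syntax
begin

lemma finite_less_inf:
  assumes "finite A" "infinite B" shows "|A| <o |B|"
  using finite_ordLess_infinite[of "|A|" "|B|"] assms card_of_well_order_on[of A] card_of_well_order_on[of B]
  by (simp add: Field_card_of)

lemma times_less:
  assumes C: "infinite C" and A: "|A| <o |C|" and B: "|B| <o |C|"
  shows "|A \<times> B| <o |C|"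
proof (cases "finite A \<and> finite B")
  case True thus ?thesis using finite_less_inf C finite_cartesian_product by metis
next
  case False
  show ?thesis
  proof (cases "|A| \<le>o |B|")
    case True
    then have "infinite B" using False card_of_ordLeq_finite by metis
    then have "|SIGMA a:A. B| \<le>o |B|"
      using card_of_Sigma_ordLeq_infinite[of B A "\<lambda>_. B"] True ordLeq_reflexive[OF card_of_Well_order] by metis
    thus ?thesis using B ordLeq_ordLess_trans by metis
  next
    case False2: False
    then have "|B| \<le>o |A|" using ordLeq_total card_of_Well_order by metis
    then have "infinite A" using False card_of_ordLeq_finite by metis
    then have "|SIGMA a:A. B| \<le>o |A|"
      using card_of_Sigma_ordLeq_infinite[of A A "\<lambda>_. B"] \<open>|B| \<le>o |A|\<close> ordLeq_reflexive[OF card_of_Well_order] by metis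
    thus ?thesis using A ordLeq_ordLess_trans by metis
  qed
qed

lemma lists_le:
  assumes W: "infinite W" shows "|lists W| \<le>o |W|"
proof -
  define L where "L n = {xs \<in> lists W. length xs = n}" for n
  have Ln: "|L n| \<le>o |W|" for n
  proof (induction n)
    case 0
    have "L 0 = {[]}" by (auto simp: L_def)
    moreover have "W \<noteq> {}" using W by auto
    ultimately show ?case using card_of_singl_ordLeq by metis
  next
    case (Suc n)
    have "L (Suc n) \<subseteq> (\<lambda>(x,xs). x # xs) ` (W \<times> L n)"
    proof
      fix ys assume "ys \<in> L (Suc n)"
      then obtain x xs where "ys = x # xs" "x \<in> W" "xs \<in> L n"
        by (cases ys) (auto simp: L_def)
      thus "ys \<in> (\<lambda>(x,xs). x # xs) ` (W \<times> L n)" by force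
    qed
    then have "|L (Suc n)| \<le>o |W \<times> L n|" by (rule surj_imp_ordLeq)
    moreover have "|SIGMA x:W. L n| \<le>o |W|"
      using card_of_Sigma_ordLeq_infinite[of W W "\<lambda>_. L n"] W Suc
        ordLeq_reflexive card_of_Well_order by blast
    ultimately show ?case using ordLeq_transitive by blast
  qed
  have "lists W = (\<Union>n\<in>UNIV. L n)" by (auto simp: L_def)
  moreover have "|\<Union>n\<in>UNIV. L n| \<le>o |W|"
    using card_of_UNION_ordLeq_infinite[of W "UNIV::nat set" L] W Ln
      infinite_iff_card_of_nat by blast
  ultimately show ?thesis by simp
qed

lemma fpow_le:
  assumes W: "infinite W" shows "|{A. A \<subseteq> W \<and> finite A}| \<le>o |W|"
proof -
  have "{A. A \<subseteq> W \<and> finite A} \<subseteq> set ` lists W"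
  proof
    fix A assume "A \<in> {A. A \<subseteq> W \<and> finite A}"
    then obtain xs where "set xs = A" "A \<subseteq> W" using finite_list by blast
    thus "A \<in> set ` lists W" by auto
  qed
  then have "|{A. A \<subseteq> W \<and> finite A}| \<le>o |lists W|" by (rule surj_imp_ordLeq)
  thus ?thesis using lists_le[OF W] ordLeq_transitive by blast
qed

lemma fpow_less:
  assumes I: "infinite I" and W: "|W| <o |I|" shows "|{A. A \<subseteq> W \<and> finite A}| <o |I|"
proof (cases "finite W")
  case True
  then have "finite {A. A \<subseteq> W \<and> finite A}" by (simp add: finite_subset[of _ "Pow W"] subset_eq)
  thus ?thesis using finite_less_inf I by blast
next
  case False thus ?thesis using fpow_le W ordLeq_ordLess_trans by blast
qed

lemma wo_card: "wo_rel (card_of I)"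
  by (simp add: wo_rel_def card_of_Well_order)

lemma not_cofinal_bound:
  assumes "S \<subseteq> I" "\<not> cofinal S (card_of I)"
  shows "\<exists>a\<in>I. \<forall>b\<in>S. (b,a) \<in> (card_of I)"
proof -
  from assms obtain a where a: "a \<in> I" "\<forall>b\<in>S. \<not>(a \<noteq> b \<and> (a,b) \<in> card_of I)"
    unfolding cofinal_def Field_card_of by auto
  have "(b,a) \<in> (card_of I)" if "b \<in> S" for b
  proof (cases "a = b")
    case True thus ?thesis using wo_rel.REFL[OF wo_card[of I]] a that assms
      by (auto simp: refl_on_def Field_card_of)
  next
    case False thus ?thesis using a that assms wo_rel.TOTALS[OF wo_card[of I]]
      by (auto simp: Field_card_of)
  qed
  thus ?thesis using a by blast
qed

lemma small_under:
  assumes "|B| <o (card_of I)" shows "\<exists>a\<in>I. |B| \<le>o |underS (card_of I) a|"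
proof -
  obtain a where a: "a \<in> Field (card_of I)" "|B| =o Restr (card_of I) (underS (card_of I) a)"
    using ordLess_iff_ordIso_Restr[OF card_of_Well_order card_of_Well_order, of B I] assms by blast
  have "|Field |B|| \<le>o |Field (Restr (card_of I) (underS (card_of I) a))|"
    using card_of_mono2 a(2) ordIso_imp_ordLeq by blast
  moreover have "Field (Restr (card_of I) (underS (card_of I) a)) \<subseteq> underS (card_of I) a"
    by (auto simp: Field_def)
  ultimately have "|B| \<le>o |underS (card_of I) a|"
    using card_of_mono1 ordLeq_transitive Field_card_of by metis
  thus ?thesis using a Field_card_of by metis
qed


definition goodX :: "'i set \<Rightarrow> ('i \<Rightarrow> 'a set) \<Rightarrow> 'a set \<Rightarrow> bool" where
  "goodX I F X \<equiv>
     (card_of {\<xi> \<in> I. card (F \<xi> \<inter> X) = 1}, card_of I) \<in> ordIso \<and>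
     (card X = 1 \<or> has_card_cf X I \<or> (card_of X, card_of I) \<in> ordIso) \<and>
     (\<forall>X'. X' \<subseteq> X \<and> (card_of X', card_of X) \<in> ordIso \<longrightarrow> (card_of {\<xi> \<in> I. card (F \<xi> \<inter> X') = 1}, card_of I) \<in> ordIso) \<and>
     (\<forall>x\<in>X. \<exists>\<xi>\<in>I. F \<xi> \<inter> X = {x})"

lemma caseA:
  assumes D: "|{\<xi>\<in>I. x \<in> F \<xi>}| =o |I|" and I: "infinite I"
  shows "goodX I F {x}"
proof -
  have eq: "{\<xi> \<in> I. card (F \<xi> \<inter> {x}) = 1} = {\<xi>\<in>I. x \<in> F \<xi>}"
  proof -
    have "card (F \<xi> \<inter> {x}) = 1 \<longleftrightarrow> x \<in> F \<xi>" for \<xi>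
      by (cases "x \<in> F \<xi>") (auto simp: Int_insert_right)
    thus ?thesis by auto
  qed
  have sub: "X' = {x}" if h: "X' \<subseteq> {x}" "|X'| =o |{x}|" for X'
  proof (rule ccontr)
    assume "X' \<noteq> {x}"
    then have "X' = {}" using h(1) by auto
    obtain f where "bij_betw f X' {x}" using h(2) card_of_ordIso[of X' "{x}"] by blast
    thus False using \<open>X' = {}\<close> by (auto simp: bij_betw_def)
  qed
  have "infinite {\<xi>\<in>I. x \<in> F \<xi>}" using D I card_of_ordIso_finite by metis
  then obtain \<xi> where "\<xi> \<in> I" "x \<in> F \<xi>" by (metis (mono_tags, lifting) empty_Collect_eq finite.emptyI)
  then have "F \<xi> \<inter> {x} = {x}" by auto
  moreover have "\<forall>X'. X' \<subseteq> {x} \<and> |X'| =o |{x}| \<longrightarrow> |{\<xi> \<in> I. card (F \<xi> \<inter> X') = 1}| =o |I|"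
    using sub eq D by metis
  ultimately show ?thesis unfolding goodX_def using eq D \<open>\<xi> \<in> I\<close> by auto
qed

lemma caseB1:
  assumes F: "\<forall>\<xi>\<in>I. F \<xi> \<noteq> {}" and M: "M \<subseteq> I" and dis: "\<forall>\<xi>\<in>M. \<forall>\<eta>\<in>M. \<xi> \<noteq> \<eta> \<longrightarrow> F \<xi> \<inter> F \<eta> = {}"
    and MI: "|M| =o |I|"
  shows "\<exists>X. goodX I F X"
proof -
  define c where "c \<xi> = (SOME x. x \<in> F \<xi>)" for \<xi>
  have c: "c \<xi> \<in> F \<xi>" if "\<xi> \<in> M" for \<xi>
    using F M that unfolding c_def by (metis some_in_eq subsetD)
  define X where "X = c ` M"
  have key: "F \<xi> \<inter> X' = {c \<xi>}" if h: "\<xi> \<in> M" "X' \<subseteq> X" "c \<xi> \<in> X'" for \<xi> X'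
  proof
    show "F \<xi> \<inter> X' \<subseteq> {c \<xi>}"
    proof
      fix y assume y: "y \<in> F \<xi> \<inter> X'"
      then have "y \<in> c ` M" using h X_def by auto
      then obtain \<eta> where "\<eta> \<in> M" "y = c \<eta>" by auto
      then have "y \<in> F \<eta>" using c by auto
      then have "\<xi> = \<eta>" using dis y h(1) \<open>\<eta> \<in> M\<close> by blast
      thus "y \<in> {c \<xi>}" using \<open>y = c \<eta>\<close> by simp
    qed
    show "{c \<xi>} \<subseteq> F \<xi> \<inter> X'" using c h by auto
  qed
  have inj: "inj_on c M"
  proof (rule inj_onI)
    fix \<xi> \<eta> assume "\<xi> \<in> M" "\<eta> \<in> M" "c \<xi> = c \<eta>"
    then have "c \<xi> \<in> F \<xi> \<inter> F \<eta>" using c[of \<xi>] c[of \<eta>] by auto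
    thus "\<xi> = \<eta>" using dis \<open>\<xi> \<in> M\<close> \<open>\<eta> \<in> M\<close> by blast
  qed
  have XM: "|X| =o |M|"
    using card_of_ordIso[of M X] inj unfolding X_def bij_betw_def by (metis ordIso_symmetric)
  have iii: "|{\<xi> \<in> I. card (F \<xi> \<inter> X') = 1}| =o |I|" if "X' \<subseteq> X" "|X'| =o |X|" for X'
  proof -
    define M' where "M' = {\<xi>\<in>M. c \<xi> \<in> X'}"
    have "bij_betw c M' X'"
      unfolding bij_betw_def M'_def using inj that(1) X_def
      by (auto intro: inj_on_subset)
    then have "|M'| =o |X'|" using card_of_ordIso by metis
    then have "|M'| =o |I|" using that(2) XM MI ordIso_transitive by metis
    moreover have "M' \<subseteq> {\<xi> \<in> I. card (F \<xi> \<inter> X') = 1}"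
      using key M that(1) by (auto simp: M'_def)
    ultimately have "|I| \<le>o |{\<xi> \<in> I. card (F \<xi> \<inter> X') = 1}|"
      using card_of_mono1 ordIso_ordLeq_trans ordIso_symmetric by metis
    moreover have "|{\<xi> \<in> I. card (F \<xi> \<inter> X') = 1}| \<le>o |I|" by (rule card_of_mono1) auto
    ultimately show ?thesis using ordIso_iff_ordLeq by blast
  qed
  have "goodX I F X"
    unfolding goodX_def
  proof (intro conjI)
    show "|{\<xi> \<in> I. card (F \<xi> \<inter> X) = 1}| =o |I|" using iii[of X] ordIso_reflexive card_of_Well_order by blast
    show "card X = 1 \<or> has_card_cf X I \<or> |X| =o |I|" using XM MI ordIso_transitive by metis
    show "\<forall>X'. X' \<subseteq> X \<and> |X'| =o |X| \<longrightarrow> |{\<xi> \<in> I. card (F \<xi> \<inter> X') = 1}| =o |I|" using iii by blast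
    show "\<forall>x\<in>X. \<exists>\<xi>\<in>I. F \<xi> \<inter> X = {x}" using key M X_def by blast
  qed
  thus ?thesis by blast
qed


lemma caseB2:
  assumes I: "infinite I" and F: "\<forall>\<xi>\<in>I. finite (F \<xi>) \<and> F \<xi> \<noteq> {}"
    and D: "\<forall>x. |{\<xi>\<in>I. x \<in> F \<xi>}| <o |I|" and W: "|W| <o |I|"
    and meet: "\<forall>\<xi>\<in>I. F \<xi> \<inter> W \<noteq> {}"
  shows "\<exists>X. goodX I F X"
proof -
  let ?r = "card_of I"
  have wo: "wo_rel ?r" by (rule wo_card)
  have FI: "Field ?r = I" by (rule Field_card_of)
  have rtrans: "(a,c) \<in> ?r" if "(a,b) \<in> ?r" "(b,c) \<in> ?r" for a b c
    using wo_rel.TRANS[OF wo] that unfolding trans_def by blast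
  have rantisym: "a = b" if "(a,b) \<in> ?r" "(b,a) \<in> ?r" for a b
    using wo_rel.ANTISYM[OF wo] that unfolding antisym_def by blast
  have rrefl: "(a,a) \<in> ?r" if "a \<in> I" for a
    using wo_rel.REFL[OF wo] that FI unfolding refl_on_def by blast
  have rtot: "(a,b) \<in> ?r \<or> (b,a) \<in> ?r" if "a \<in> I" "b \<in> I" for a b
    using wo_rel.TOTALS[OF wo] that FI by blast

  define \<K> where "\<K> = {K. K \<subseteq> I \<and> cofinal K ?r}"
  have "cofinal I ?r"
    unfolding cofinal_def using infinite_Card_order_limit[OF card_of_Card_order] I FI by metis
  then have "I \<in> \<K>" unfolding \<K>_def by blast
  then have "card_of ` \<K> \<noteq> {}" by blast
  moreover have "\<forall>r\<in>card_of ` \<K>. Card_order r" using card_of_Card_order by blast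
  ultimately obtain rK where "rK \<in> card_of ` \<K>" "\<forall>r'\<in>card_of ` \<K>. rK \<le>o r'"
    using exists_minim_Card_order[of "card_of ` \<K>"] by blast
  then obtain K where K: "K \<subseteq> I" "cofinal K ?r" and Kmin: "\<forall>K'. K' \<subseteq> I \<and> cofinal K' ?r \<longrightarrow> |K| \<le>o |K'|"
    unfolding \<K>_def by auto

  have smallK: "\<exists>a\<in>I. \<forall>b\<in>S. (b,a) \<in> ?r" if "S \<subseteq> I" "|S| <o |K|" for S
  proof -
    have "\<not> cofinal S ?r"
    proof
      assume "cofinal S ?r"
      then have "|K| \<le>o |S|" using Kmin that(1) by blast
      thus False using that(2) not_ordLess_ordLeq by metis
    qed
    thus ?thesis using not_cofinal_bound that(1) by blast
  qed

  have finbound: "finite S \<Longrightarrow> S \<subseteq> I \<Longrightarrow> \<exists>a\<in>I. \<forall>b\<in>S. (b,a) \<in> ?r" for S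
  proof (induction S rule: finite_induct)
    case empty
    then show ?case using I by (metis empty_iff finite.emptyI subsetI subset_antisym ex_in_conv)
  next
    case (insert y S)
    then obtain a where a: "a \<in> I" "\<forall>b\<in>S. (b,a) \<in> ?r" by auto
    have y: "y \<in> I" using insert by auto
    show ?case
    proof (cases "(y,a) \<in> ?r")
      case True thus ?thesis using a by auto
    next
      case False
      then have "(a,y) \<in> ?r" using rtot a y by blast
      thus ?thesis using a y rtrans rrefl by blast
    qed
  qed

  have Kinf: "infinite K"
  proof
    assume "finite K"
    then obtain a where a: "a \<in> I" "\<forall>b\<in>K. (b,a) \<in> ?r" using finbound K by blast
    then obtain b where "b \<in> K" "a \<noteq> b" "(a,b) \<in> ?r" using K(2) FI unfolding cofinal_def by blast
    thus False using a rantisym by blast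
  qed
  have KI: "|K| \<le>o |I|" using K(1) by (rule card_of_mono1)

  have U: "|\<Union>x\<in>P. {\<xi>\<in>I. x \<in> F \<xi>}| <o |I|" if P: "|P| <o |K|" for P
  proof -
    have "\<forall>x\<in>P. \<exists>a\<in>I. |{\<xi>\<in>I. x \<in> F \<xi>}| \<le>o |underS ?r a|"
      using small_under[OF D[rule_format]] by blast
    then have "\<forall>x\<in>P. \<exists>a. a \<in> I \<and> |{\<xi>\<in>I. x \<in> F \<xi>}| \<le>o |underS ?r a|"
      by (simp only: Bex_def)
    then obtain f where f: "\<forall>x\<in>P. f x \<in> I \<and> |{\<xi>\<in>I. x \<in> F \<xi>}| \<le>o |underS ?r (f x)|"
      by (rule bchoice[elim_format]) blast
    have "|f ` P| <o |K|" using ordLeq_ordLess_trans[OF card_of_image P] .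
    moreover have "f ` P \<subseteq> I" using f by blast
    ultimately obtain a where a: "a \<in> I" "\<forall>b\<in>f ` P. (b,a) \<in> ?r" using smallK by blast
    have sub: "underS ?r (f x) \<subseteq> underS ?r a" if "x \<in> P" for x
    proof
      fix b assume "b \<in> underS ?r (f x)"
      then have b: "b \<noteq> f x" "(b, f x) \<in> ?r" by (auto simp: underS_def)
      have fa: "(f x, a) \<in> ?r" using a that by blast
      then have "(b,a) \<in> ?r" using b rtrans by blast
      moreover have "b \<noteq> a" using b fa rantisym by blast
      ultimately show "b \<in> underS ?r a" by (auto simp: underS_def)
    qed
    have le: "\<forall>x\<in>P. |{\<xi>\<in>I. x \<in> F \<xi>}| \<le>o |underS ?r a|"
    proof
      fix x assume x: "x \<in> P"
      show "|{\<xi>\<in>I. x \<in> F \<xi>}| \<le>o |underS ?r a|"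
        using ordLeq_transitive[OF conjunct2[OF f[rule_format, OF x]] card_of_mono1[OF sub[OF x]]] .
    qed
    have Ua: "|underS ?r a| <o |I|"
      using card_of_underS[OF card_of_Card_order, of a I] a FI by simp
    have PI: "|P| <o |I|" using ordLess_ordLeq_trans[OF P KI] .
    have "|\<Union>x\<in>P. {\<xi>\<in>I. x \<in> F \<xi>}| \<le>o |SIGMA x:P. {\<xi>\<in>I. x \<in> F \<xi>}|" by (rule card_of_UNION_Sigma)
    also have "|SIGMA x:P. {\<xi>\<in>I. x \<in> F \<xi>}| \<le>o |P \<times> underS ?r a|"
      using card_of_Sigma_mono1[of P "\<lambda>x. {\<xi>\<in>I. x \<in> F \<xi>}" "\<lambda>_. underS ?r a"] le by blast
    finally show ?thesis using ordLeq_ordLess_trans[OF _ times_less[OF I PI Ua]] by blast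
  qed

  let ?s = "card_of K"
  have wos: "wo_rel ?s" by (rule wo_card)
  have FK: "Field ?s = K" by (rule Field_card_of)
  have stot: "(a,b) \<in> ?s \<or> (b,a) \<in> ?s" if "a \<in> K" "b \<in> K" for a b
    using wo_rel.TOTALS[OF wos] that FK by blast
  have underK: "|under ?s k| <o |K|" if k: "k \<in> K" for k
  proof -
    have "|underS ?s k| <o ?s"
      using card_of_underS[OF card_of_Card_order, of k K] k FK by simp
    moreover have "|{k}| <o |K|" using finite_less_inf[OF finite.insertI[OF finite.emptyI] Kinf] .
    ultimately have 1: "|underS ?s k \<union> {k}| <o |K|" by (rule card_of_Un_ordLess_infinite[OF Kinf])
    have "under ?s k \<subseteq> underS ?s k \<union> {k}" by (auto simp: under_def underS_def)
    from ordLeq_ordLess_trans[OF card_of_mono1[OF this] 1] show ?thesis .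
  qed
  have underKsub: "under ?s k \<subseteq> K" for k
    using FK by (auto simp: under_def intro: FieldI1)
  have "\<forall>k\<in>K. \<exists>a. a \<in> I \<and> (\<forall>b\<in>under ?s k. (b,a) \<in> ?r)"
  proof
    fix k assume k: "k \<in> K"
    have "under ?s k \<subseteq> I" using underKsub K(1) by blast
    from smallK[OF this underK[OF k]] show "\<exists>a. a \<in> I \<and> (\<forall>b\<in>under ?s k. (b,a) \<in> ?r)" by blast
  qed
  then obtain g where g: "\<forall>k\<in>K. g k \<in> I \<and> (\<forall>b\<in>under ?s k. (b, g k) \<in> ?r)"
    by (rule bchoice[elim_format]) blast

  have robust: "I \<subseteq> (\<Union>k\<in>K'. underS ?r (g k))" if K': "K' \<subseteq> K" "|K'| =o |K|" for K'
  proof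
    fix i assume i: "i \<in> I"
    obtain k0 where k0: "k0 \<in> K" "i \<noteq> k0" "(i,k0) \<in> ?r"
      using K(2) i FI unfolding cofinal_def by blast
    have "\<not> K' \<subseteq> under ?s k0"
    proof
      assume "K' \<subseteq> under ?s k0"
      from ordLeq_ordLess_trans[OF card_of_mono1[OF this] underK[OF k0(1)]]
      have "|K'| <o |K|" .
      from ordIso_ordLess_trans[OF ordIso_symmetric[OF K'(2)] this] have "|K| <o |K|" .
      thus False using ordLess_irreflexive[of "|K|"] by simp
    qed
    then obtain k where k: "k \<in> K'" "k \<notin> under ?s k0" by blast
    then have "(k,k0) \<notin> ?s" by (auto simp: under_def)
    then have "(k0,k) \<in> ?s" using stot k K'(1) k0(1) by blast
    then have "k0 \<in> under ?s k" by (auto simp: under_def)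
    then have "(k0, g k) \<in> ?r" using g k K'(1) by blast
    then have ig: "(i, g k) \<in> ?r" using rtrans k0(3) by blast
    have "i \<noteq> g k"
    proof
      assume "i = g k"
      then have "i = k0" using rantisym k0(3) \<open>(k0, g k) \<in> ?r\<close> by blast
      thus False using k0(2) by blast
    qed
    then have "i \<in> underS ?r (g k)" using ig by (auto simp: underS_def)
    thus "i \<in> (\<Union>k\<in>K'. underS ?r (g k))" using k by blast
  qed

  define C where "C A = {\<xi>\<in>I. F \<xi> \<inter> W = A}" for A
  define good where "good k A \<longleftrightarrow> C A \<noteq> {} \<and> |underS ?r (g k)| \<le>o |C A|" for k A
  have goodfin: "finite A \<and> A \<noteq> {} \<and> A \<subseteq> W" if h: "C A \<noteq> {}" for A
  proof -
    obtain \<xi> where \<xi>: "\<xi> \<in> I" "F \<xi> \<inter> W = A" using h unfolding C_def by blast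
    have "finite (F \<xi>)" "F \<xi> \<inter> W \<noteq> {}" using F meet \<xi>(1) by auto
    thus ?thesis using \<xi>(2) by auto
  qed

  have exist: "\<exists>A. good k A \<and> A \<inter> P = {}" if k: "k \<in> K" and P: "P \<subseteq> W" "|P| <o |K|" for k P
  proof (rule ccontr)
    assume none: "\<not> (\<exists>A. good k A \<and> A \<inter> P = {})"
    define E where "E = (\<Union>x\<in>P. {\<xi>\<in>I. x \<in> F \<xi>})"
    have E: "|E| <o |I|" unfolding E_def using U[OF P(2)] .
    let ?U0 = "underS ?r (g k)"
    have U0: "|?U0| <o |I|"
      using card_of_underS[OF card_of_Card_order, of "g k" I] g k FI by simp
    define \<F> where "\<F> = {A. A \<subseteq> W \<and> finite A \<and> A \<inter> P = {} \<and> C A \<noteq> {}}"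
    have bad: "\<forall>A\<in>\<F>. |C A| \<le>o |?U0|"
    proof
      fix A assume A: "A \<in> \<F>"
      then have "\<not> |?U0| \<le>o |C A|" using none good_def \<F>_def by blast
      then have "|C A| <o |?U0|" using not_ordLeq_iff_ordLess[OF card_of_Well_order card_of_Well_order, of ?U0 "C A"] by simp
      thus "|C A| \<le>o |?U0|" by (rule ordLess_imp_ordLeq)
    qed
    have cover: "I - E \<subseteq> (\<Union>A\<in>\<F>. C A)"
    proof
      fix \<xi> assume \<xi>: "\<xi> \<in> I - E"
      let ?A = "F \<xi> \<inter> W"
      have "?A \<inter> P = {}" using \<xi> E_def by blast
      moreover have "\<xi> \<in> C ?A" using \<xi> C_def by blast
      ultimately have "?A \<in> \<F>" using F \<xi> \<F>_def by auto
      thus "\<xi> \<in> (\<Union>A\<in>\<F>. C A)" using \<open>\<xi> \<in> C ?A\<close> by blast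
    qed
    have FF: "|\<F>| <o |I|"
    proof -
      have "\<F> \<subseteq> {A. A \<subseteq> W \<and> finite A}" using \<F>_def by blast
      from ordLeq_ordLess_trans[OF card_of_mono1[OF this] fpow_less[OF I W]] show ?thesis .
    qed
    have "|\<Union>A\<in>\<F>. C A| \<le>o |SIGMA A:\<F>. C A|" by (rule card_of_UNION_Sigma)
    also have "|SIGMA A:\<F>. C A| \<le>o |\<F> \<times> ?U0|"
      using card_of_Sigma_mono1[of \<F> C "\<lambda>_. ?U0"] bad by blast
    finally have 2: "|\<Union>A\<in>\<F>. C A| \<le>o |\<F> \<times> ?U0|" .
    from ordLeq_ordLess_trans[OF 2 times_less[OF I FF U0]] have "|\<Union>A\<in>\<F>. C A| <o |I|" .
    from ordLeq_ordLess_trans[OF card_of_mono1[OF cover] this] have "|I - E| <o |I|" .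
    from card_of_Un_ordLess_infinite[OF I E this] have "|E \<union> (I - E)| <o |I|" .
    moreover have "E \<union> (I - E) = I" using E_def by blast
    ultimately have "|I| <o |I|" by simp
    thus False using ordLess_irreflexive[of "|I|"] by simp
  qed

  define R where "R = ?s - Id"
  have wfR: "wf R" unfolding R_def by (rule wo_rel.WF[OF wos])
  define H where "H h k = (SOME A. good k A \<and> (\<forall>k'. (k',k) \<in> R \<longrightarrow> A \<inter> h k' = {}))"
    for h k
  define Af where "Af = wfrec R H"
  have Afeq: "Af k = (SOME A. good k A \<and> (\<forall>k'. (k',k) \<in> R \<longrightarrow> A \<inter> Af k' = {}))" for k
  proof -
    have "Af k = H (cut Af R k) k" using def_wfrec[OF Af_def[THEN eq_reflection] wfR] .
    also have "\<dots> = (SOME A. good k A \<and> (\<forall>k'. (k',k) \<in> R \<longrightarrow> A \<inter> Af k' = {}))"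
      unfolding H_def by (simp add: cut_apply cong: conj_cong imp_cong)
    finally show ?thesis .
  qed
  have Afgood: "k \<in> K \<longrightarrow> good k (Af k) \<and> (\<forall>k'. (k',k) \<in> R \<longrightarrow> Af k \<inter> Af k' = {})" for k
  proof (induction k rule: wf_induct_rule[OF wfR])
    case (1 k)
    show ?case
    proof
      assume kK: "k \<in> K"
      define J where "J = {k'. (k',k) \<in> R}"
      have JK: "J \<subseteq> K" using FK unfolding J_def R_def by (auto intro: FieldI1)
      have Jgood: "good k' (Af k')" if "k' \<in> J" for k'
        using 1 that JK unfolding J_def by blast
      define P where "P = (\<Union>k'\<in>J. Af k')"
      have Jfin: "finite (Af k')" "Af k' \<subseteq> W" if "k' \<in> J" for k'
        using goodfin Jgood[OF that] good_def by blast+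
      have PW: "P \<subseteq> W" using Jfin P_def by blast
      have "J = underS ?s k" unfolding J_def R_def underS_def by auto
      then have JlessK: "|J| <o |K|"
        using card_of_underS[OF card_of_Card_order, of k K] kK FK by simp
      have PK: "|P| <o |K|"
      proof (cases "finite J")
        case True
        then have "finite P" using Jfin P_def by blast
        thus ?thesis using finite_less_inf[OF _ Kinf] by blast
      next
        case False
        have "\<forall>k'\<in>J. |Af k'| \<le>o |J|"
          using Jfin finite_less_inf[OF _ False] ordLess_imp_ordLeq by blast
        from card_of_UNION_ordLeq_infinite[OF False ordLeq_reflexive[OF card_of_Well_order] this]
        have "|P| \<le>o |J|" unfolding P_def .
        from ordLeq_ordLess_trans[OF this JlessK] show ?thesis .
      qed
      obtain A where A: "good k A" "A \<inter> P = {}" using exist[OF kK PW PK] by blast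
      then have "good k A \<and> (\<forall>k'. (k',k) \<in> R \<longrightarrow> A \<inter> Af k' = {})"
        unfolding P_def J_def by blast
      then have "good k (Af k) \<and> (\<forall>k'. (k',k) \<in> R \<longrightarrow> Af k \<inter> Af k' = {})"
        unfolding Afeq[of k] by (rule someI)
      thus "good k (Af k) \<and> (\<forall>k'. (k',k) \<in> R \<longrightarrow> Af k \<inter> Af k' = {})" .
    qed
  qed
  have Afg: "good k (Af k)" if "k \<in> K" for k using Afgood that by blast
  have Afne: "Af k \<noteq> {}" "Af k \<subseteq> W" if "k \<in> K" for k
    using goodfin Afg[OF that] good_def by blast+
  have Afdis: "Af k \<inter> Af k' = {}" if "k \<in> K" "k' \<in> K" "k \<noteq> k'" for k k'
  proof (cases "(k',k) \<in> ?s")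
    case True
    then have "(k',k) \<in> R" using that R_def by auto
    thus ?thesis using Afgood[of k] that by blast
  next
    case False
    then have "(k,k') \<in> ?s" using stot that by blast
    then have "(k,k') \<in> R" using that R_def by auto
    thus ?thesis using Afgood[of k'] that by blast
  qed
  define x where "x k = (SOME y. y \<in> Af k)" for k
  have xA: "x k \<in> Af k" if "k \<in> K" for k
    using Afne(1)[OF that] unfolding x_def by (simp add: some_in_eq)
  have xinj: "inj_on x K"
  proof (rule inj_onI)
    fix k k' assume "k \<in> K" "k' \<in> K" "x k = x k'"
    then have "x k \<in> Af k \<inter> Af k'" using xA[of k] xA[of k'] by auto
    thus "k = k'" using Afdis \<open>k \<in> K\<close> \<open>k' \<in> K\<close> by blast
  qed
  define X where "X = x ` K"
  have XW: "X \<subseteq> W" using X_def xA Afne(2) by blast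
  have "bij_betw x K X" using xinj X_def by (simp add: bij_betw_def)
  then have "|K| =o |X|" using card_of_ordIso by blast
  then have XK: "|X| =o |K|" by (rule ordIso_symmetric)
  have key: "F \<xi> \<inter> X' = {x k}" if h: "k \<in> K" "X' \<subseteq> X" "x k \<in> X'" "\<xi> \<in> C (Af k)" for k X' \<xi>
  proof
    have FW: "F \<xi> \<inter> W = Af k" using h(4) C_def by blast
    show "F \<xi> \<inter> X' \<subseteq> {x k}"
    proof
      fix y assume y: "y \<in> F \<xi> \<inter> X'"
      then have "y \<in> X" using h(2) by blast
      then obtain k'' where k'': "k'' \<in> K" "y = x k''" using X_def by blast
      have "y \<in> Af k" using y XW FW \<open>y \<in> X\<close> by blast
      moreover have "y \<in> Af k''" using xA k'' by blast
      ultimately have "k'' = k" using Afdis k''(1) h(1) by blast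
      thus "y \<in> {x k}" using k'' by blast
    qed
    show "{x k} \<subseteq> F \<xi> \<inter> X'" using FW xA[OF h(1)] h(3) by blast
  qed
  have Cdis: "C (Af k) \<inter> C (Af k') = {}" if "k \<in> K" "k' \<in> K" "k \<noteq> k'" for k k'
  proof (rule ccontr)
    assume "C (Af k) \<inter> C (Af k') \<noteq> {}"
    then obtain \<xi> where "\<xi> \<in> C (Af k)" "\<xi> \<in> C (Af k')" by blast
    then have "Af k = Af k'" using C_def by blast
    thus False using Afdis[OF that] Afne(1)[OF that(1)] by blast
  qed
  have iii: "|{\<xi> \<in> I. card (F \<xi> \<inter> X') = 1}| =o |I|" if h: "X' \<subseteq> X" "|X'| =o |X|" for X'
  proof -
    define K' where "K' = {k\<in>K. x k \<in> X'}"
    have "bij_betw x K' X'"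
      unfolding bij_betw_def K'_def using inj_on_subset[OF xinj] h(1) X_def by auto
    then have "|K'| =o |X'|" using card_of_ordIso by blast
    from ordIso_transitive[OF ordIso_transitive[OF this h(2)] XK] have K'K: "|K'| =o |K|" .
    have K'sub: "K' \<subseteq> K" using K'_def by blast
    define T where "T = {\<xi> \<in> I. card (F \<xi> \<inter> X') = 1}"
    have "|I| \<le>o |\<Union>k\<in>K'. underS ?r (g k)|" by (rule card_of_mono1[OF robust[OF K'sub K'K]])
    also have "|\<Union>k\<in>K'. underS ?r (g k)| \<le>o |SIGMA k:K'. underS ?r (g k)|" by (rule card_of_UNION_Sigma)
    also have "|SIGMA k:K'. underS ?r (g k)| \<le>o |SIGMA k:K'. C (Af k)|"
    proof (rule card_of_Sigma_mono1, rule ballI)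
      fix k assume "k \<in> K'"
      then show "|underS ?r (g k)| \<le>o |C (Af k)|" using Afg K'sub good_def by blast
    qed
    also have "|SIGMA k:K'. C (Af k)| \<le>o |T|"
    proof -
      have "inj_on snd (SIGMA k:K'. C (Af k))"
      proof (rule inj_onI)
        fix p q assume p: "p \<in> (SIGMA k:K'. C (Af k))" and q: "q \<in> (SIGMA k:K'. C (Af k))" and "snd p = snd q"
        then have "fst p = fst q" using Cdis K'sub by (cases p, cases q) auto
        thus "p = q" using \<open>snd p = snd q\<close> by (simp add: prod_eq_iff)
      qed
      moreover have "snd ` (SIGMA k:K'. C (Af k)) \<subseteq> T"
      proof
        fix \<xi> assume "\<xi> \<in> snd ` (SIGMA k:K'. C (Af k))"
        then obtain k where k: "k \<in> K'" "\<xi> \<in> C (Af k)" by auto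
        then have "F \<xi> \<inter> X' = {x k}" using key[of k X' \<xi>] K'_def h(1) by blast
        moreover have "\<xi> \<in> I" using k C_def by blast
        ultimately show "\<xi> \<in> T" unfolding T_def by simp
      qed
      ultimately show ?thesis using card_of_ordLeq by blast
    qed
    finally have 1: "|I| \<le>o |T|" .
    have 2: "|T| \<le>o |I|" unfolding T_def by (rule card_of_mono1) auto
    from 1 2 show ?thesis unfolding T_def using ordIso_iff_ordLeq by blast
  qed
  have "goodX I F X"
    unfolding goodX_def
  proof (intro conjI)
    show "|{\<xi> \<in> I. card (F \<xi> \<inter> X) = 1}| =o |I|"
      using iii[OF subset_refl ordIso_reflexive[OF card_of_Well_order]] .
    have "has_card_cf X I"
      unfolding has_card_cf_def using K Kmin XK by blast
    thus "card X = 1 \<or> has_card_cf X I \<or> |X| =o |I|" by blast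
    show "\<forall>X'. X' \<subseteq> X \<and> |X'| =o |X| \<longrightarrow> |{\<xi> \<in> I. card (F \<xi> \<inter> X') = 1}| =o |I|"
      using iii by blast
    show "\<forall>y\<in>X. \<exists>\<xi>\<in>I. F \<xi> \<inter> X = {y}"
    proof
      fix y assume "y \<in> X"
      then obtain k where k: "k \<in> K" "y = x k" using X_def by blast
      then obtain \<xi> where "\<xi> \<in> C (Af k)" using Afg good_def by blast
      then have "F \<xi> \<inter> X = {y}" "\<xi> \<in> I" using key[of k X \<xi>] k \<open>y \<in> X\<close> C_def by auto
      thus "\<exists>\<xi>\<in>I. F \<xi> \<inter> X = {y}" by blast
    qed
  qed
  thus ?thesis by blast
qed

lemma main:
  assumes I: "infinite I" and F: "\<forall>\<xi>\<in>I. finite (F \<xi>) \<and> F \<xi> \<noteq> {}"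
  shows "\<exists>X. goodX I F X"
proof (cases "\<exists>x. |{\<xi>\<in>I. x \<in> F \<xi>}| =o |I|")
  case True thus ?thesis using caseA I by metis
next
  case False
  have D: "\<forall>x. |{\<xi>\<in>I. x \<in> F \<xi>}| <o |I|"
  proof
    fix x
    have "|{\<xi>\<in>I. x \<in> F \<xi>}| \<le>o |I|" by (rule card_of_mono1) auto
    thus "|{\<xi>\<in>I. x \<in> F \<xi>}| <o |I|" using False ordLeq_iff_ordLess_or_ordIso by blast
  qed
  define \<A> where "\<A> = {M. M \<subseteq> I \<and> (\<forall>\<xi>\<in>M. \<forall>\<eta>\<in>M. \<xi> \<noteq> \<eta> \<longrightarrow> F \<xi> \<inter> F \<eta> = {})}"
  have "\<forall>C\<in>chains \<A>. \<Union>C \<in> \<A>"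
  proof
    fix C assume "C \<in> chains \<A>"
    then have C1: "C \<subseteq> \<A>" and C2: "\<forall>A\<in>C. \<forall>B\<in>C. A \<subseteq> B \<or> B \<subseteq> A"
      by (auto simp: chains_def chain_subset_def)
    have "\<Union>C \<subseteq> I" using C1 \<A>_def by auto
    moreover have "F \<xi> \<inter> F \<eta> = {}" if h: "\<xi> \<in> \<Union>C" "\<eta> \<in> \<Union>C" "\<xi> \<noteq> \<eta>" for \<xi> \<eta>
    proof -
      obtain A B where AB: "A \<in> C" "B \<in> C" "\<xi> \<in> A" "\<eta> \<in> B" using h(1,2) by auto
      show ?thesis
      proof (cases "A \<subseteq> B")
        case True thus ?thesis using AB C1 h(3) \<A>_def by blast
      next
        case False
        then have "B \<subseteq> A" using C2 AB by blast
        thus ?thesis using AB C1 h(3) \<A>_def by blast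
      qed
    qed
    ultimately show "\<Union>C \<in> \<A>" unfolding \<A>_def by blast
  qed
  then obtain M where M: "M \<in> \<A>" and Mmax: "\<forall>X\<in>\<A>. M \<subseteq> X \<longrightarrow> X = M"
    using Zorn_Lemma by blast
  have MI: "M \<subseteq> I" and Mdis: "\<forall>\<xi>\<in>M. \<forall>\<eta>\<in>M. \<xi> \<noteq> \<eta> \<longrightarrow> F \<xi> \<inter> F \<eta> = {}"
    using M \<A>_def by auto
  show ?thesis
  proof (cases "|M| =o |I|")
    case True
    thus ?thesis using caseB1[OF _ MI Mdis] F by blast
  next
    case False
    have "|M| \<le>o |I|" using MI card_of_mono1 by blast
    then have Mless: "|M| <o |I|" using False ordLeq_iff_ordLess_or_ordIso by blast
    define W where "W = (\<Union>\<xi>\<in>M. F \<xi>)"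
    have Wless: "|W| <o |I|"
    proof (cases "finite M")
      case True
      then have "finite W" using F MI W_def by auto
      thus ?thesis using finite_less_inf I by blast
    next
      case False
      have "\<forall>\<xi>\<in>M. |F \<xi>| \<le>o |M|"
        using F MI False finite_less_inf ordLess_imp_ordLeq by blast
      then have "|W| \<le>o |M|"
        unfolding W_def using card_of_UNION_ordLeq_infinite[OF False] ordLeq_reflexive[OF card_of_Well_order] by blast
      thus ?thesis using Mless ordLeq_ordLess_trans by blast
    qed
    have meet: "\<forall>\<xi>\<in>I. F \<xi> \<inter> W \<noteq> {}"
    proof (intro ballI notI)
      fix \<xi> assume \<xi>: "\<xi> \<in> I" and e: "F \<xi> \<inter> W = {}"
      have "insert \<xi> M \<in> \<A>"
        unfolding \<A>_def using MI Mdis \<xi> e W_def by auto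
      then have "insert \<xi> M = M" using Mmax by blast
      then have "\<xi> \<in> M" by blast
      then have "F \<xi> \<subseteq> W" using W_def by auto
      thus False using e F \<xi> by blast
    qed
    show ?thesis using caseB2[OF I F D Wless meet] .
  qed
qed

end

theorem theorem2:
  fixes I :: "'i set" and F :: "'i \<Rightarrow> 'a set"
  assumes "infinite I"
    and "\<And>\<xi>. \<xi> \<in> I \<Longrightarrow> finite (F \<xi>) \<and> F \<xi> \<noteq> {}"
  shows "\<exists>X :: 'a set.
     (card_of {\<xi> \<in> I. card (F \<xi> \<inter> X) = 1}, card_of I) \<in> ordIso \<and>
     (card X = 1 \<or> has_card_cf X I \<or> (card_of X, card_of I) \<in> ordIso) \<and>
     (\<forall>X'. X' \<subseteq> X \<and> (card_of X', card_of X) \<in> ordIso \<longrightarrow> (card_of {\<xi> \<in> I. card (F \<xi> \<inter> X') = 1}, card_of I) \<in> ordIso) \<and>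
     (\<forall>x\<in>X. \<exists>\<xi>\<in>I. F \<xi> \<inter> X = {x})"
  using main[of I F] assms unfolding goodX_def by blast

end
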